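(* Let $A\in\mathbb{R}^{n\times n}$ be an adequate matrix that is group invertible. Then $A$ is a $P_{\#}$-matrix.
   Context: $R(A)$, $N(A)$ denote the range and null space of $A$. $A$ is group invertible if there is $X$ with $AXA=A$, $XAX=X$, $AX=XA$; equivalently $R(A)\cap N(A)=\{0\}$ (i.e. $\operatorname{rank}A=\operatorname{rank}A^2$). $A$ is called adequate if (1) all principal minors of $A$ are nonnegative, and (2) for every principal minor that vanishes, the associated rows of $A$ are linearly dependent and the associated columns of $A$ are linearly dependent. A matrix $A$ is a $P_{\#}$-matrix if: $x\in R(A)$ and $x_i(Ax)_i\le 0$ for all $i$ imply $x=0$. *)

theory Defs
  imports "HOL-Analysis.Analysis"
begin

text \<open>Principal minor of A associated with the index set S (Leibniz formula of the
  principal submatrix A[S,S]); the empty minor is 1.\<close>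
definition principal_minor :: "real^'n^'n \<Rightarrow> 'n set \<Rightarrow> real" where
  "principal_minor A S =
     (\<Sum>p\<in>{p. p permutes S}. of_int (sign p) * (\<Prod>i\<in>S. A $ i $ p i))"

text \<open>The rows of A indexed by S (as a family, i.e. counted with multiplicity) are linearly dependent.\<close>
definition rows_dependent :: "real^'n^'n \<Rightarrow> 'n set \<Rightarrow> bool" where
  "rows_dependent A S \<longleftrightarrow>
     (\<exists>c::'n \<Rightarrow> real. (\<exists>i\<in>S. c i \<noteq> 0) \<and> (\<Sum>i\<in>S. c i *\<^sub>R row i A) = 0)"

definition cols_dependent :: "real^'n^'n \<Rightarrow> 'n set \<Rightarrow> bool" where
  "cols_dependent A S \<longleftrightarrow>
     (\<exists>c::'n \<Rightarrow> real. (\<exists>j\<in>S. c j \<noteq> 0) \<and> (\<Sum>j\<in>S. c j *\<^sub>R column j A) = 0)"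

definition adequate :: "real^'n^'n \<Rightarrow> bool" where
  "adequate A \<longleftrightarrow>
     (\<forall>S. S \<noteq> {} \<longrightarrow> principal_minor A S \<ge> 0) \<and>
     (\<forall>S. S \<noteq> {} \<longrightarrow> principal_minor A S = 0 \<longrightarrow> rows_dependent A S \<and> cols_dependent A S)"

definition group_invertible :: "real^'n^'n \<Rightarrow> bool" where
  "group_invertible A \<longleftrightarrow> (\<exists>X. A ** X ** A = A \<and> X ** A ** X = X \<and> A ** X = X ** A)"

definition P_sharp_matrix :: "real^'n^'n \<Rightarrow> bool" where
  "P_sharp_matrix A \<longleftrightarrow>
     (\<forall>x. x \<in> range (\<lambda>y. A *v y) \<and> (\<forall>i. x $ i * (A *v x) $ i \<le> 0) \<longrightarrow> x = 0)"

end

theory Submission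
  imports Defs
begin

definition RR :: "real^'n^'n \<Rightarrow> 'n set \<Rightarrow> real^'n^'n" where
  "RR B S = (\<chi> i j. if i \<in> S \<and> j \<in> S then B$i$j else if i = j then 1 else 0)"

definition dg :: "('n \<Rightarrow> real) \<Rightarrow> real^'n^'n" where
  "dg d = (\<chi> i j. if i = j then d i else 0)"

lemma pm_det:
  fixes B :: "real^'n^'n"
  shows "principal_minor B S = det (RR B S)"
proof -
  have "principal_minor B S =
     (\<Sum>p\<in>{p. p permutes (UNIV::'n set)}. of_int (sign p) * (\<Prod>i\<in>UNIV. RR B S $ i $ p i))"
    unfolding principal_minor_def
  proof (rule sum.mono_neutral_cong_left)
    show "finite {p. p permutes (UNIV::'n set)}" by (simp add: finite_permutations)
    show "{p. p permutes S} \<subseteq> {p. p permutes (UNIV::'n set)}"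
      using permutes_subset by blast
    show "\<forall>p\<in>{p. p permutes UNIV} - {p. p permutes S}.
        of_int (sign p) * (\<Prod>i\<in>UNIV. RR B S $ i $ p i) = 0"
    proof
      fix p assume p: "p \<in> {p. p permutes (UNIV::'n set)} - {p. p permutes S}"
      then obtain i where i: "i \<notin> S" "p i \<noteq> i"
        unfolding permutes_def by auto
      have "(\<Prod>i\<in>UNIV. RR B S $ i $ p i) = 0"
        by (rule prod_zero) (use i in \<open>auto simp: RR_def\<close>)
      then show "of_int (sign p) * (\<Prod>i\<in>UNIV. RR B S $ i $ p i) = 0" by simp
    qed
    show "of_int (sign p) * (\<Prod>i\<in>S. B $ i $ p i) = of_int (sign p) * (\<Prod>i\<in>UNIV. RR B S $ i $ p i)"
      if p: "p \<in> {p. p permutes S}" for p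
    proof -
      have pp: "p permutes S" using p by simp
      have "(\<Prod>i\<in>UNIV. RR B S $ i $ p i) = (\<Prod>i\<in>S. RR B S $ i $ p i)"
        by (rule prod.mono_neutral_right) (use pp in \<open>auto simp: RR_def permutes_not_in\<close>)
      also have "\<dots> = (\<Prod>i\<in>S. B $ i $ p i)"
        by (rule prod.cong) (use pp in \<open>auto simp: RR_def permutes_in_image\<close>)
      finally show ?thesis by simp
    qed
  qed
  then show ?thesis unfolding det_def .
qed

lemma det_RR_kernel:
  fixes B :: "real^'n^'n"
  assumes supp: "\<forall>i. x$i \<noteq> 0 \<longrightarrow> i \<in> S" and ker: "\<forall>i\<in>S. (B *v x)$i = 0" and nz: "x \<noteq> 0"
  shows "det (RR B S) = 0"
proof (rule ccontr)
  assume "det (RR B S) \<noteq> 0"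
  then have "invertible (RR B S)" by (simp add: invertible_det_nz)
  then obtain C where C: "C ** RR B S = mat 1" unfolding invertible_def by blast
  have "RR B S *v x = 0"
  proof (subst vec_eq_iff, intro allI)
    fix i
    show "(RR B S *v x) $ i = 0 $ i"
    proof (cases "i \<in> S")
      case True
      have "(RR B S *v x) $ i = (\<Sum>j\<in>UNIV. B$i$j * x$j)"
        unfolding matrix_vector_mult_def
        by (simp, rule sum.cong) (use supp True in \<open>auto simp: RR_def\<close>)
      also have "\<dots> = 0" using ker True by (simp add: matrix_vector_mult_def)
      finally show ?thesis by simp
    next
      case False
      have "(RR B S *v x) $ i = (\<Sum>j\<in>UNIV. (if i = j then 1 else 0) * x$j)"
        unfolding matrix_vector_mult_def
        by (simp, rule sum.cong) (use False in \<open>auto simp: RR_def\<close>)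
      also have "\<dots> = (\<Sum>j\<in>UNIV. if i = j then x$j else 0)" by (rule sum.cong) auto
      also have "\<dots> = x $ i" by simp
      finally show ?thesis using supp False by auto
    qed
  qed
  then have "C *v (RR B S *v x) = 0" by simp
  then have "x = 0" by (simp add: matrix_vector_mul_assoc C)
  with nz show False by simp
qed

lemma det_row_replace:
  fixes B :: "real^'n^'n"
  assumes "k \<in> S"
  shows "det (\<chi> i. if i = k then axis k 1 else row i (RR B S)) = det (RR B (S - {k}))"
  unfolding det_def
proof (rule sum.cong[OF refl])
  fix p assume "p \<in> {p. p permutes (UNIV::'n set)}"
  then have pp: "p permutes (UNIV::'n set)" by simp
  have "(\<Prod>i\<in>UNIV. (\<chi> i. if i = k then axis k 1 else row i (RR B S)) $ i $ p i)
      = (\<Prod>i\<in>UNIV. RR B (S - {k}) $ i $ p i)"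
  proof (cases "p k = k")
    case True
    show ?thesis
    proof (rule prod.cong[OF refl])
      fix i :: 'n
      show "(\<chi> i. if i = k then axis k 1 else row i (RR B S)) $ i $ p i = RR B (S - {k}) $ i $ p i"
      proof (cases "i = k")
        case True then show ?thesis using \<open>p k = k\<close> by (simp add: RR_def axis_def)
      next
        case False
        have "p i \<noteq> p k" using False permutes_inj[OF pp] unfolding inj_def by blast
        then have "p i \<noteq> k" using True by simp
        then show ?thesis using False by (simp add: RR_def row_def)
      qed
    qed
  next
    case False
    have "(\<Prod>i\<in>UNIV. (\<chi> i. if i = k then axis k 1 else row i (RR B S)) $ i $ p i) = 0"
      by (rule prod_zero, simp, rule bexI[of _ k]) (use False in \<open>simp_all add: axis_def\<close>)
    moreover have "(\<Prod>i\<in>UNIV. RR B (S - {k}) $ i $ p i) = 0"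
      by (rule prod_zero, simp, rule bexI[of _ k]) (use False in \<open>simp_all add: RR_def\<close>)
    ultimately show ?thesis by linarith
  qed
  then show "of_int (sign p) * (\<Prod>i\<in>UNIV. (\<chi> i. if i = k then axis k 1 else row i (RR B S)) $ i $ p i)
      = of_int (sign p) * (\<Prod>i\<in>UNIV. RR B (S - {k}) $ i $ p i)" by simp
qed

lemma mono_aux:
  fixes A :: "real^'n^'n"
  assumes P0: "\<And>S. det (RR A S) \<ge> 0" and K: "finite K"
  shows "\<forall>S d. (\<forall>i\<in>S. d i \<ge> 0) \<longrightarrow> (\<forall>i\<in>S. d i \<noteq> 0 \<longrightarrow> i \<in> K) \<longrightarrow> det (RR A S) \<le> det (RR (A + dg d) S)"
  using K
proof (induct K rule: finite_induct)
  case empty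
  show ?case
  proof (intro allI impI)
    fix S and d :: "'n \<Rightarrow> real" assume "\<forall>i\<in>S. d i \<ge> 0" "\<forall>i\<in>S. d i \<noteq> 0 \<longrightarrow> i \<in> {}"
    then have "RR (A + dg d) S = RR A S" by (auto simp: RR_def dg_def vec_eq_iff)
    then show "det (RR A S) \<le> det (RR (A + dg d) S)" by simp
  qed
next
  case (insert k K)
  show ?case
  proof (intro allI impI)
    fix S and d :: "'n \<Rightarrow> real" assume d0: "\<forall>i\<in>S. d i \<ge> 0" and dK: "\<forall>i\<in>S. d i \<noteq> 0 \<longrightarrow> i \<in> insert k K"
    show "det (RR A S) \<le> det (RR (A + dg d) S)"
    proof (cases "k \<in> S \<and> d k \<noteq> 0")
      case False
      then have "\<forall>i\<in>S. d i \<noteq> 0 \<longrightarrow> i \<in> K" using dK by auto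
      then show ?thesis using insert.hyps(3) d0 by blast
    next
      case True
      define d' where "d' = d(k := 0)"
      define M where "M = RR (A + dg d') S"
      have d'0: "\<forall>i\<in>S. d' i \<ge> 0" and d'K: "\<forall>i\<in>S. d' i \<noteq> 0 \<longrightarrow> i \<in> K"
        using d0 dK by (auto simp: d'_def)
      have d'0': "\<forall>i\<in>S-{k}. d' i \<ge> 0" and d'K': "\<forall>i\<in>S-{k}. d' i \<noteq> 0 \<longrightarrow> i \<in> K"
        using d'0 d'K by auto
      have eq: "RR (A + dg d) S = (\<chi> i. if i = k then row k M + d k *s axis k 1 else row i M)"
        using True by (auto simp: vec_eq_iff M_def RR_def dg_def d'_def row_def axis_def)
      have "det (RR (A + dg d) S) = det (\<chi> i. if i = k then row k M else row i M)
          + det (\<chi> i. if i = k then d k *s axis k 1 else row i M)"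
        unfolding eq using det_row_add[where k=k and a="\<lambda>i. row k M" and b="\<lambda>i. d k *s axis k 1" and c="\<lambda>i. row i M"]
        by simp
      also have "(\<chi> i. if i = k then row k M else row i M) = M" by (simp add: vec_eq_iff row_def)
      also have "det (\<chi> i. if i = k then d k *s axis k 1 else row i M) = d k * det (\<chi> i. if i = k then axis k 1 else row i M)"
        using det_row_mul[where k=k and c="d k" and a="\<lambda>i. axis k 1" and b="\<lambda>i. row i M"] by simp
      also have "det (\<chi> i. if i = k then axis k (1::real) else row i M) = det (RR (A + dg d') (S - {k}))"
        unfolding M_def using True by (intro det_row_replace) simp
      finally have "det (RR (A + dg d) S) = det M + d k * det (RR (A + dg d') (S - {k}))" .
      moreover have "det (RR A S) \<le> det M" using insert.hyps(3) d'0 d'K unfolding M_def by blast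
      moreover have "det (RR A (S-{k})) \<le> det (RR (A + dg d') (S - {k}))"
        using insert.hyps(3) d'0' d'K' by blast
      moreover have "0 \<le> det (RR A (S-{k}))" by (rule P0)
      moreover have "d k \<ge> 0" using d0 True by auto
      ultimately show ?thesis by (smt (verit) mult_nonneg_nonneg)
    qed
  qed
qed

lemma P0_RR:
  fixes A :: "real^'n^'n"
  assumes "adequate A"
  shows "det (RR A S) \<ge> 0"
proof (cases "S = {}")
  case True
  then have "RR A S = mat 1" by (simp add: RR_def mat_def vec_eq_iff)
  then show ?thesis by simp
next
  case False
  then show ?thesis using assms unfolding adequate_def pm_det by blast
qed

lemma col_adequate:
  fixes A :: "real^'n^'n"
  assumes ad: "adequate A"
  shows "(\<forall>i. x$i * (A *v x)$i \<le> 0) \<Longrightarrow> A *v x = 0"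
proof (induction "card {i. x$i \<noteq> 0}" arbitrary: x rule: less_induct)
  case less
  show ?case
  proof (cases "x = 0")
    case True then show ?thesis by simp
  next
    case False
    define S where "S = {i. x$i \<noteq> 0}"
    define y where "y = A *v x"
    define d where "d i = - y$i / x$i" for i
    have Sne: "S \<noteq> {}" using False unfolding S_def by (auto simp: vec_eq_iff)
    have d0: "\<forall>i\<in>S. d i \<ge> 0"
    proof
      fix i assume "i \<in> S"
      then have xi: "x$i \<noteq> 0" by (simp add: S_def)
      have "x$i * y$i \<le> 0" using less.prems by (simp add: y_def)
      then have "0 \<le> - y$i / x$i"
        using xi by (cases "x$i > 0") (auto simp: field_simps mult_le_0_iff)
      then show "d i \<ge> 0" by (simp add: d_def)
    qed
    have ker: "\<forall>i\<in>S. ((A + dg d) *v x)$i = 0"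
    proof
      fix i assume "i \<in> S"
      then have xi: "x$i \<noteq> 0" by (simp add: S_def)
      have "(dg d *v x)$i = (\<Sum>j\<in>UNIV. (if i = j then d i else 0) * x$j)"
        by (simp add: matrix_vector_mult_def dg_def)
      also have "\<dots> = (\<Sum>j\<in>UNIV. if i = j then d i * x$j else 0)" by (rule sum.cong) auto
      also have "\<dots> = d i * x$i" by simp
      finally have "((A + dg d) *v x)$i = y$i + d i * x$i"
        by (simp add: y_def matrix_vector_mult_add_rdistrib)
      then show "((A + dg d) *v x)$i = 0" using xi by (simp add: d_def)
    qed
    have "det (RR (A + dg d) S) = 0"
      by (rule det_RR_kernel) (use ker False in \<open>auto simp: S_def\<close>)
    moreover have "det (RR A S) \<le> det (RR (A + dg d) S)"
      using mono_aux[OF P0_RR[OF ad], of UNIV] d0 by auto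
    moreover have "det (RR A S) \<ge> 0" by (rule P0_RR[OF ad])
    ultimately have "principal_minor A S = 0" by (simp add: pm_det)
    then have "cols_dependent A S" using ad Sne unfolding adequate_def by blast
    then obtain c where c1: "\<exists>j\<in>S. c j \<noteq> 0" and c2: "(\<Sum>j\<in>S. c j *\<^sub>R column j A) = 0"
      unfolding cols_dependent_def by blast
    define cv where "cv = (\<chi> j. if j \<in> S then c j else (0::real))"
    have Acv: "A *v cv = 0"
    proof (subst vec_eq_iff, intro allI)
      fix i
      have "(A *v cv)$i = (\<Sum>j\<in>S. A$i$j * c j)"
        unfolding matrix_vector_mult_def cv_def
        by (simp add: if_distrib sum.If_cases)
      also have "\<dots> = (\<Sum>j\<in>S. c j *\<^sub>R column j A)$i"
        by (simp add: column_def mult.commute)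
      finally show "(A *v cv)$i = 0$i" using c2 by simp
    qed
    obtain w where Aw: "A *v w = 0" and wS: "\<forall>i. w$i \<noteq> 0 \<longrightarrow> i \<in> S"
      and wpos: "\<exists>j. w$j / x$j > 0"
    proof -
      obtain j where j: "j \<in> S" "c j \<noteq> 0" using c1 by blast
      have xj: "x$j \<noteq> 0" using j by (simp add: S_def)
      have cvS: "\<forall>i. cv$i \<noteq> 0 \<longrightarrow> i \<in> S" by (simp add: cv_def)
      show ?thesis
      proof (cases "cv$j / x$j > 0")
        case True
        then show ?thesis using that[of cv] Acv cvS by blast
      next
        case False
        have "cv$j / x$j \<noteq> 0" using j xj by (simp add: cv_def)
        with False have "cv$j / x$j < 0" by linarith
        then have "(- cv)$j / x$j > 0" by simp
        moreover have "A *v (- cv) = 0" using Acv matrix_vector_mult_diff_distrib[of A 0 cv] by simp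
        moreover have "\<forall>i. (- cv)$i \<noteq> 0 \<longrightarrow> i \<in> S" using cvS by simp
        ultimately show ?thesis using that[of "- cv"] by blast
      qed
    qed
    define J where "J = {j. w$j / x$j > 0}"
    have Jfin: "finite J" by simp
    have Jne: "J \<noteq> {}" using wpos by (simp add: J_def)
    define t where "t = Min ((\<lambda>j. x$j / w$j) ` J)"
    have "t \<in> (\<lambda>j. x$j / w$j) ` J" unfolding t_def using Jfin Jne by (intro Min_in) auto
    then obtain k where kJ: "k \<in> J" and tk: "t = x$k / w$k" by blast
    have tle: "\<And>j. j \<in> J \<Longrightarrow> t \<le> x$j / w$j" unfolding t_def using Jfin by simp
    define x' where "x' = x - t *s w"
    have Ax': "A *v x' = A *v x"
      by (simp add: x'_def matrix_vector_mult_diff_distrib matrix_vector_mult_scaleR[symmetric] Aw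
          vector_scalar_commute)
    have lam: "\<forall>i. \<exists>l\<ge>0. x'$i = l * x$i"
    proof
      fix i
      show "\<exists>l\<ge>0. x'$i = l * x$i"
      proof (cases "x$i = 0")
        case True
        then have "w$i = 0" using wS by (auto simp: S_def)
        then show ?thesis using True by (auto simp: x'_def)
      next
        case xi: False
        have "x'$i = (1 - t * (w$i / x$i)) * x$i" using xi by (simp add: x'_def field_simps)
        moreover have "1 - t * (w$i / x$i) \<ge> 0"
        proof (cases "w$i / x$i > 0")
          case True
          then have iJ: "i \<in> J" by (simp add: J_def)
          have "t * (w$i / x$i) \<le> (x$i / w$i) * (w$i / x$i)"
            using tle[OF iJ] True by (intro mult_right_mono) auto
          also have "\<dots> \<le> 1" using xi by (simp add: field_simps)
          finally show ?thesis by simp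
        next
          case False
          have "t > 0"
          proof -
            have "w$k / x$k > 0" using kJ by (simp add: J_def)
            then have "x$k / w$k > 0" by (simp add: zero_less_divide_iff) blast
            then show ?thesis using tk by simp
          qed
          then have "t * (w$i / x$i) \<le> 0" using False by (intro mult_nonneg_nonpos) auto
          then show ?thesis by simp
        qed
        ultimately show ?thesis by blast
      qed
    qed
    have prem': "\<forall>i. x'$i * (A *v x')$i \<le> 0"
    proof
      fix i
      obtain l where l: "l \<ge> 0" "x'$i = l * x$i" using lam by blast
      have "x'$i * (A *v x')$i = l * (x$i * (A *v x)$i)" using l Ax' by simp
      also have "\<dots> \<le> 0" using l(1) less.prems by (simp add: mult_nonneg_nonpos)
      finally show "x'$i * (A *v x')$i \<le> 0" .
    qed
    have sub: "{i. x'$i \<noteq> 0} \<subseteq> {i. x$i \<noteq> 0} - {k}"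
    proof
      fix i assume "i \<in> {i. x'$i \<noteq> 0}"
      then have i: "x'$i \<noteq> 0" by simp
      obtain l where l: "x'$i = l * x$i" using lam by blast
      have "x$i \<noteq> 0" using i l by auto
      moreover have "i \<noteq> k"
      proof
        assume "i = k"
        have "w$k \<noteq> 0" using kJ by (auto simp: J_def)
        then have "x'$k = 0" using tk by (simp add: x'_def)
        with i \<open>i = k\<close> show False by simp
      qed
      ultimately show "i \<in> {i. x$i \<noteq> 0} - {k}" by simp
    qed
    have kin: "k \<in> {i. x$i \<noteq> 0}" using kJ by (auto simp: J_def)
    have "card {i. x'$i \<noteq> 0} < card {i. x$i \<noteq> 0}"
    proof -
      have "card {i. x'$i \<noteq> 0} \<le> card ({i. x$i \<noteq> 0} - {k})" by (rule card_mono) (use sub in auto)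
      also have "\<dots> < card {i. x$i \<noteq> 0}" using kin by (intro card_Diff1_less) auto
      finally show ?thesis .
    qed
    then have "A *v x' = 0" using less.hyps prem' by blast
    then show ?thesis using Ax' by simp
  qed
qed

theorem mainTheorem3:
  fixes A :: "real^'n^'n"
  assumes "adequate A" and "group_invertible A"
  shows "P_sharp_matrix A"
  unfolding P_sharp_matrix_def
proof (intro allI impI)
  fix x assume h: "x \<in> range (\<lambda>y. A *v y) \<and> (\<forall>i. x $ i * (A *v x) $ i \<le> 0)"
  then obtain y where xy: "x = A *v y" by blast
  have Ax: "A *v x = 0" using col_adequate[OF assms(1)] h by blast
  obtain X where X: "A ** X ** A = A" "X ** A ** X = X" "A ** X = X ** A"
    using assms(2) unfolding group_invertible_def by blast
  have "x = (A ** X ** A) *v y" using xy X(1) by simp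
  also have "\<dots> = (X ** (A ** A)) *v y" using X(3) by (simp add: matrix_mul_assoc)
  also have "\<dots> = X *v (A *v x)" by (simp add: xy matrix_vector_mul_assoc)
  also have "\<dots> = 0" using Ax by simp
  finally show "x = 0" .
qed

end
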